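(* Let $H$ be a finite connected graph (loops allowed) with at least two nodes, such that there is no pair of distinct nodes $i\neq j$ with $N(i)\subseteq N(j)$. Let $G=H\times H$ be its weak square. Then the projection $\pi_1:G\to H$, $\pi_1(i_1,i_2)=i_1$, is an isolated vertex of the graph $\hom(G,H)$; in particular $\hom(G,H)$ is disconnected.
   Context: $N(i)$ denotes the set of nodes adjacent to $i$ in $H$ (containing $i$ iff $i$ is looped). The weak square $H\times H$ has node set all ordered pairs $(i_1,i_2)$ of nodes of $H$, with $(i_1,i_2)\sim(j_1,j_2)$ iff $i_1\sim j_1$ and $i_2\sim j_2$ in $H$ (so it may have loops). $\hom(G,H)$ is the set of graph homomorphisms $G\to H$, made into a graph by declaring two homomorphisms adjacent iff they differ at exactly one node of $G$. *)

theory Defs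
  imports Main "HOL-Library.FuncSet"
begin

definition graph :: "'a set \<Rightarrow> ('a \<Rightarrow> 'a \<Rightarrow> bool) \<Rightarrow> bool" where
  "graph V E \<longleftrightarrow> (\<forall>u v. E u v \<longrightarrow> u \<in> V \<and> v \<in> V) \<and> (\<forall>u v. E u v \<longrightarrow> E v u)"

definition connected_graph :: "'a set \<Rightarrow> ('a \<Rightarrow> 'a \<Rightarrow> bool) \<Rightarrow> bool" where
  "connected_graph V E \<longleftrightarrow> V \<noteq> {} \<and>
     (\<forall>u\<in>V. \<forall>v\<in>V. (u, v) \<in> {(x, y). x \<in> V \<and> y \<in> V \<and> E x y}\<^sup>*)"

definition nbhd :: "'a set \<Rightarrow> ('a \<Rightarrow> 'a \<Rightarrow> bool) \<Rightarrow> 'a \<Rightarrow> 'a set" where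
  "nbhd V E i = {j \<in> V. E i j}"

definition weak_square_edges :: "('a \<Rightarrow> 'a \<Rightarrow> bool) \<Rightarrow> ('a \<times> 'a) \<Rightarrow> ('a \<times> 'a) \<Rightarrow> bool" where
  "weak_square_edges E p q \<longleftrightarrow> E (fst p) (fst q) \<and> E (snd p) (snd q)"

definition homs :: "'a set \<Rightarrow> ('a \<Rightarrow> 'a \<Rightarrow> bool) \<Rightarrow> 'b set \<Rightarrow> ('b \<Rightarrow> 'b \<Rightarrow> bool)
    \<Rightarrow> ('a \<Rightarrow> 'b) set" where
  "homs VG EG VH EH = {f \<in> VG \<rightarrow>\<^sub>E VH. \<forall>u\<in>VG. \<forall>v\<in>VG. EG u v \<longrightarrow> EH (f u) (f v)}"

definition hom_adj :: "'a set \<Rightarrow> ('a \<Rightarrow> 'b) \<Rightarrow> ('a \<Rightarrow> 'b) \<Rightarrow> bool" where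
  "hom_adj VG f g \<longleftrightarrow> card {x \<in> VG. f x \<noteq> g x} = 1"

end

theory Submission
  imports Defs
begin

lemma nb_exists:
  assumes "(b, v) \<in> {(x, y). x \<in> V \<and> y \<in> V \<and> E x y}\<^sup>*"
  shows "v = b \<or> (\<exists>w\<in>V. w \<noteq> b \<and> E b w)"
  using assms
proof (induction rule: rtrancl_induct)
  case base then show ?case by simp
next
  case (step y z)
  then show ?case by (cases "z = b") auto
qed

theorem mainTheorem9:
  fixes V :: "'a set" and E :: "'a \<Rightarrow> 'a \<Rightarrow> bool"
  assumes "graph V E"
    and "finite V"
    and "connected_graph V E"
    and "card V \<ge> 2"
    and "\<forall>i\<in>V. \<forall>j\<in>V. i \<noteq> j \<longrightarrow> \<not> (nbhd V E i \<subseteq> nbhd V E j)"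
  shows "restrict fst (V \<times> V) \<in> homs (V \<times> V) (weak_square_edges E) V E
     \<and> (\<forall>g\<in>homs (V \<times> V) (weak_square_edges E) V E.
           \<not> hom_adj (V \<times> V) (restrict fst (V \<times> V)) g)
     \<and> \<not> connected_graph (homs (V \<times> V) (weak_square_edges E) V E) (hom_adj (V \<times> V))"
proof -
  let ?H = "homs (V \<times> V) (weak_square_edges E) V E"
  let ?p = "restrict fst (V \<times> V)"
  let ?q = "restrict snd (V \<times> V)"
  have p: "?p \<in> ?H" unfolding homs_def weak_square_edges_def by auto
  have q: "?q \<in> ?H" unfolding homs_def weak_square_edges_def by auto
  obtain a0 b0 where ab0: "a0 \<in> V" "b0 \<in> V" "a0 \<noteq> b0"
  proof -
    from assms(4) have "\<not> (\<exists>x. V \<subseteq> {x})"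
      by (metis One_nat_def card.empty card_mono finite.emptyI finite_insert card_insert_disjoint empty_iff not_numeral_le_zero numeral_le_one_iff semiring_norm(69) le_trans)
    then show ?thesis using that by blast
  qed
  have nb: "\<exists>w\<in>V. w \<noteq> b \<and> E b w" if "b \<in> V" for b
  proof -
    obtain v where "v \<in> V" "v \<noteq> b" using ab0 by blast
    then have "(b, v) \<in> {(x, y). x \<in> V \<and> y \<in> V \<and> E x y}\<^sup>*"
      using assms(3) that unfolding connected_graph_def by blast
    with nb_exists[OF this] \<open>v \<noteq> b\<close> show ?thesis by blast
  qed
  have iso: "\<not> hom_adj (V \<times> V) ?p g" if g: "g \<in> ?H" for g
  proof
    assume "hom_adj (V \<times> V) ?p g"
    then obtain z where z: "{x \<in> V \<times> V. ?p x \<noteq> g x} = {z}"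
      unfolding hom_adj_def by (meson card_1_singletonE)
    obtain a b where zab: "z = (a, b)" by fastforce
    have zin: "(a, b) \<in> {x \<in> V \<times> V. ?p x \<noteq> g x}" unfolding z zab by (rule singletonI)
    then have abV': "(a, b) \<in> V \<times> V" and ne: "?p (a, b) \<noteq> g (a, b)" by (simp_all only: mem_Collect_eq) blast+
    then have abV: "a \<in> V" "b \<in> V" by (simp_all only: mem_Sigma_iff)
    have gne: "g (a, b) \<noteq> a" using ne abV' by (simp only: restrict_apply' fst_conv) (metis)
    have geq: "g x = fst x" if "x \<in> V \<times> V" "x \<noteq> (a, b)" for x
    proof -
      have "x \<notin> {x \<in> V \<times> V. ?p x \<noteq> g x}" unfolding z zab using that(2) by (simp only: singleton_iff) blast
      then show ?thesis using that(1) by (simp only: mem_Collect_eq restrict_apply') (metis)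
    qed
    define c where "c = g (a, b)"
    have cV: "c \<in> V" using g abV unfolding homs_def c_def by auto
    obtain y where y: "y \<in> V" "y \<noteq> b" "E b y" using nb abV by blast
    have "nbhd V E a \<subseteq> nbhd V E c"
    proof
      fix x assume "x \<in> nbhd V E a"
      then have x: "x \<in> V" "E a x" unfolding nbhd_def by auto
      have "E (g (a, b)) (g (x, y))"
        using g abV x y unfolding homs_def weak_square_edges_def by auto
      moreover have "g (x, y) = x" using geq x y by auto
      ultimately show "x \<in> nbhd V E c" using x unfolding nbhd_def c_def by auto
    qed
    moreover have "a \<noteq> c" using gne unfolding c_def by (metis)
    ultimately show False using assms(5) abV cV by metis
  qed
  have pq: "?p \<noteq> ?q"
  proof
    assume "?p = ?q"
    then have "?p (a0, b0) = ?q (a0, b0)" by simp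
    then show False using ab0 by simp
  qed
  have nc: "\<not> connected_graph ?H (hom_adj (V \<times> V))"
  proof
    assume "connected_graph ?H (hom_adj (V \<times> V))"
    then have "(?p, ?q) \<in> {(x, y). x \<in> ?H \<and> y \<in> ?H \<and> hom_adj (V \<times> V) x y}\<^sup>*"
      using p q unfolding connected_graph_def by blast
    then show False
      by (rule converse_rtranclE) (use pq iso in blast)+
  qed
  show ?thesis using p iso nc by blast
qed

end
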